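(* Let $\langle E,\rightarrow\rangle$ be a computation and $b$ a regular predicate. Every consistent cut in $\mathcal{C}_b(E)$ can be expressed as the union of some subset of the set $\mathcal{J}_b(E)=\{J_b(e)\mid e\in E\}$.
   Context: A computation is a directed graph $\langle E, \rightarrow\rangle$ whose vertices (events) are partitioned among processes, each process having an initial event and a final event; $\top$ denotes the set of final events. A subset $C\subseteq E$ is a consistent cut if for every edge $(u,v)$, $v\in C$ implies $u\in C$; $\emptyset$ and $E$ are trivial. A predicate is regular if whenever consistent cuts $C_1,C_2$ satisfy it, so do $C_1\cap C_2$ and $C_1\cup C_2$. $\mathcal{C}_b(E)$ denotes the set of non-trivial consistent cuts satisfying $b$ together with $\emptyset$ and $E$ (treated as satisfying $b$). For an event $e$, $J_b(e)$ is the least consistent cut of $\langle E,\rightarrow\rangle$ that satisfies $b$ and contains $e$; if none exists or $e\in\top$, $J_b(e)=E$. The union of the empty subset is $\emptyset$. *)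

theory Defs
  imports Main
begin

text \<open>Events are partitioned among processes by the map proc (the processes are proc ` E);
  each process p has an initial event init p and a final event fin p on that process.
  Following the usual convention of the computation-slicing model, the initial event
  of a process precedes every event of that process and the final event succeeds
  every event of that process, and all initial (resp. final) events occur
  simultaneously, i.e. there are edges between any two of them.\<close>

definition computation ::
  "'a set \<Rightarrow> ('a \<times> 'a) set \<Rightarrow> ('a \<Rightarrow> 'p) \<Rightarrow> ('p \<Rightarrow> 'a) \<Rightarrow> ('p \<Rightarrow> 'a) \<Rightarrow> bool" where
  "computation E edge proc init fin \<longleftrightarrow>
     finite E \<and> edge \<subseteq> E \<times> E \<and>
     (\<forall>p \<in> proc ` E. init p \<in> E \<and> proc (init p) = p \<and> fin p \<in> E \<and> proc (fin p) = p) \<and>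
     (\<forall>e \<in> E. (init (proc e), e) \<in> edge\<^sup>* \<and> (e, fin (proc e)) \<in> edge\<^sup>*) \<and>
     (\<forall>p \<in> proc ` E. \<forall>q \<in> proc ` E. p \<noteq> q \<longrightarrow>
        (init p, init q) \<in> edge \<and> (fin p, fin q) \<in> edge)"

definition final_events :: "'a set \<Rightarrow> ('a \<Rightarrow> 'p) \<Rightarrow> ('p \<Rightarrow> 'a) \<Rightarrow> 'a set" where
  "final_events E proc fin = fin ` (proc ` E)"

definition consistent_cut :: "'a set \<Rightarrow> ('a \<times> 'a) set \<Rightarrow> 'a set \<Rightarrow> bool" where
  "consistent_cut E edge C \<longleftrightarrow> C \<subseteq> E \<and> (\<forall>(u, v) \<in> edge. v \<in> C \<longrightarrow> u \<in> C)"

definition regular_pred :: "'a set \<Rightarrow> ('a \<times> 'a) set \<Rightarrow> ('a set \<Rightarrow> bool) \<Rightarrow> bool" where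
  "regular_pred E edge b \<longleftrightarrow>
     (\<forall>C1 C2. consistent_cut E edge C1 \<longrightarrow> consistent_cut E edge C2 \<longrightarrow> b C1 \<longrightarrow> b C2 \<longrightarrow>
        b (C1 \<inter> C2) \<and> b (C1 \<union> C2))"

definition Cb :: "'a set \<Rightarrow> ('a \<times> 'a) set \<Rightarrow> ('a set \<Rightarrow> bool) \<Rightarrow> 'a set set" where
  "Cb E edge b = {C. consistent_cut E edge C \<and> C \<noteq> {} \<and> C \<noteq> E \<and> b C} \<union> {{}, E}"

definition least_b_cut :: "'a set \<Rightarrow> ('a \<times> 'a) set \<Rightarrow> ('a set \<Rightarrow> bool) \<Rightarrow> 'a \<Rightarrow> 'a set \<Rightarrow> bool" where
  "least_b_cut E edge b e C \<longleftrightarrow>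
     consistent_cut E edge C \<and> b C \<and> e \<in> C \<and>
     (\<forall>C'. consistent_cut E edge C' \<and> b C' \<and> e \<in> C' \<longrightarrow> C \<subseteq> C')"

definition Jb :: "'a set \<Rightarrow> ('a \<times> 'a) set \<Rightarrow> ('a \<Rightarrow> 'p) \<Rightarrow> ('p \<Rightarrow> 'a) \<Rightarrow> ('a set \<Rightarrow> bool) \<Rightarrow> 'a \<Rightarrow> 'a set" where
  "Jb E edge proc fin b e =
     (if e \<in> final_events E proc fin \<or> \<not> (\<exists>C. least_b_cut E edge b e C) then E
      else (THE C. least_b_cut E edge b e C))"

end

theory Submission
  imports Defs
begin

lemma cc_star:
  assumes "consistent_cut E edge C" "(u, v) \<in> edge\<^sup>*" "v \<in> C"
  shows "u \<in> C"
  using assms(2,3)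
proof (induction rule: converse_rtrancl_induct)
  case base then show ?case .
next
  case (step y z)
  then show ?case using assms(1) unfolding consistent_cut_def by blast
qed

lemma inter_closed:
  assumes "finite F" "F \<noteq> {}" "\<forall>X\<in>F. consistent_cut E edge X \<and> b X \<and> e \<in> X"
    and reg: "regular_pred E edge b"
  shows "consistent_cut E edge (\<Inter>F) \<and> b (\<Inter>F) \<and> e \<in> \<Inter>F"
  using assms(1,2,3)
proof (induction F rule: finite_ne_induct)
  case (singleton x) then show ?case by simp
next
  case (insert x F)
  then have h: "consistent_cut E edge (\<Inter>F)" "b (\<Inter>F)" "e \<in> \<Inter>F"
    "consistent_cut E edge x" "b x" "e \<in> x" by auto
  have "consistent_cut E edge (x \<inter> \<Inter>F)"
    using h(1,4) unfolding consistent_cut_def by blast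
  moreover have "b (x \<inter> \<Inter>F)" using reg h unfolding regular_pred_def by blast
  ultimately show ?case using h by simp
qed

theorem lemma5:
  fixes E :: "'a set" and edge :: "('a \<times> 'a) set" and proc :: "'a \<Rightarrow> 'p"
    and init fin :: "'p \<Rightarrow> 'a" and b :: "'a set \<Rightarrow> bool" and C :: "'a set"
  assumes "computation E edge proc init fin"
    and "regular_pred E edge b"
    and "C \<in> Cb E edge b"
  shows "\<exists>S \<subseteq> Jb E edge proc fin b ` E. C = \<Union> S"
proof -
  note comp = assms(1)[unfolded computation_def]
  consider "C = {}" | "C = E" | "consistent_cut E edge C" "C \<noteq> {}" "C \<noteq> E" "b C"
    using assms(3) unfolding Cb_def by blast
  then show ?thesis
  proof cases
    case 1 then show ?thesis by (intro exI[of _ "{}"]) simp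
  next
    case 2
    show ?thesis
    proof (cases "E = {}")
      case True then show ?thesis using 2 by (intro exI[of _ "{}"]) simp
    next
      case False
      then obtain e where e: "e \<in> E" by blast
      then have "fin (proc e) \<in> E" using comp by blast
      moreover have "fin (proc e) \<in> final_events E proc fin"
        using e unfolding final_events_def by blast
      ultimately have "Jb E edge proc fin b (fin (proc e)) = E" unfolding Jb_def by simp
      then have "{E} \<subseteq> Jb E edge proc fin b ` E" using \<open>fin (proc e) \<in> E\<close> by blast
      then show ?thesis using 2 by (intro exI[of _ "{E}"]) simp
    qed
  next
    case 3
    have key: "e \<in> Jb E edge proc fin b e \<and> Jb E edge proc fin b e \<subseteq> C" if eC: "e \<in> C" for e
    proof -
      have eE: "e \<in> E" using 3(1) eC unfolding consistent_cut_def by blast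
      have nf: "e \<notin> final_events E proc fin"
      proof
        assume "e \<in> final_events E proc fin"
        then obtain p where p: "p \<in> proc ` E" "e = fin p" unfolding final_events_def by blast
        have allfin: "fin q \<in> C" if "q \<in> proc ` E" for q
        proof (cases "q = p")
          case True then show ?thesis using p eC by simp
        next
          case False
          then have "(fin q, fin p) \<in> edge" using comp p that by blast
          then show ?thesis using 3(1) p eC unfolding consistent_cut_def by blast
        qed
        have "E \<subseteq> C"
        proof
          fix x assume "x \<in> E"
          then have "(x, fin (proc x)) \<in> edge\<^sup>*" "fin (proc x) \<in> C"
            using comp allfin by auto
          then show "x \<in> C" using cc_star[OF 3(1)] by blast
        qed
        then show False using 3 unfolding consistent_cut_def by blast
      qed
      define F where "F = {X. consistent_cut E edge X \<and> b X \<and> e \<in> X}"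
      have finF: "finite F"
      proof -
        have "F \<subseteq> Pow E" unfolding F_def consistent_cut_def by blast
        moreover have "finite E" using comp by blast
        ultimately show ?thesis using finite_subset by blast
      qed
      have CF: "C \<in> F" unfolding F_def using 3 eC by blast
      have I: "consistent_cut E edge (\<Inter>F) \<and> b (\<Inter>F) \<and> e \<in> \<Inter>F"
        using inter_closed[OF finF _ _ assms(2)] CF unfolding F_def by blast
      have L: "least_b_cut E edge b e (\<Inter>F)"
        unfolding least_b_cut_def using I unfolding F_def by blast
      have "(THE X. least_b_cut E edge b e X) = \<Inter>F"
        apply (rule the_equality)
         apply (rule L)
        using L unfolding least_b_cut_def by blast
      moreover have ex: "\<exists>X. least_b_cut E edge b e X" using L by blast
      ultimately have "Jb E edge proc fin b e = \<Inter>F" unfolding Jb_def using nf by simp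
      then show ?thesis using I CF by blast
    qed
    have s1: "Jb E edge proc fin b ` C \<subseteq> Jb E edge proc fin b ` E"
      using 3(1) unfolding consistent_cut_def by (intro image_mono) simp
    have s2: "C = \<Union>(Jb E edge proc fin b ` C)"
    proof
      show "C \<subseteq> \<Union>(Jb E edge proc fin b ` C)" using key by blast
      show "\<Union>(Jb E edge proc fin b ` C) \<subseteq> C" using key by blast
    qed
    show ?thesis using s1 s2 by blast
  qed
qed

end
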